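(* Let $q$ be a power of the odd prime $p$, let $d$ be a positive integer such that $f(x)=x^d$ is a planar function on $\mathbb F_{q^2}$. For $c\in\mathbb F_{q^2}^*$ and $\sigma\in\mathrm{Gal}(\mathbb F_{q^2}/\mathbb F_p)$ define $\gamma_{c,\sigma}$ on the points of $\Pi(f)$ by $(x,y)\mapsto(\sigma(cx),\sigma(c^dy))$, $(a)\mapsto(\sigma(ca))$ for $a\in\mathbb F_{q^2}$, and $(\infty)\mapsto(\infty)$. Then each $\gamma_{c,\sigma}$ is a collineation of $\Pi(f)$, and all $\gamma_{c,\sigma}$ together form a group $\Gamma$ of collineations of $\Pi(f)$. Moreover, for any $\theta,\theta'\in\mathbb F_{q^2}^*$ such that $\theta^{q+1}$ and $\theta'^{q+1}$ are nonsquares in $\mathbb F_q$, the sets $\mathcal U_\theta$ and $\mathcal U_{\theta'}$ are equivalent, i.e.\ some collineation of $\Pi(f)$ maps $\mathcal U_\theta$ onto $\mathcal U_{\theta'}$.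
   Context: A function $f:\mathbb F_{q^2}\to\mathbb F_{q^2}$ is planar if for every $a\neq0$ the map $x\mapsto f(x+a)-f(x)$ is a bijection. For planar $f$, $\Pi(f)$ is the projective plane with points $(x,y)\in\mathbb F_{q^2}^2$ and $(a)$ for $a\in\mathbb F_{q^2}\cup\{\infty\}$, and lines $L_{a,b}=\{(x,f(x+a)-b):x\in\mathbb F_{q^2}\}\cup\{(a)\}$, $N_a=\{(a,y):y\in\mathbb F_{q^2}\}\cup\{(\infty)\}$ ($a,b\in\mathbb F_{q^2}$), $L_\infty=\{(a):a\in\mathbb F_{q^2}\cup\{\infty\}\}$, incidence being membership. A collineation is a bijection on points mapping lines onto lines. For $\theta\in\mathbb F_{q^2}^*$, $\mathcal U_\theta:=\{(x,t\theta):x\in\mathbb F_{q^2},t\in\mathbb F_q\}\cup\{(\infty)\}$. *)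

theory Defs
  imports Main "HOL-Computational_Algebra.Primes"
begin

text \<open>Points of the plane Pi(f): affine points Aff x y, and points at infinity
  Dir (Some a) = (a) for a in the field and Dir None = (infinity).\<close>
datatype 'a point = Aff 'a 'a | Dir "'a option"

definition planar :: "('a::field \<Rightarrow> 'a) \<Rightarrow> bool" where
  "planar f \<longleftrightarrow> (\<forall>a. a \<noteq> 0 \<longrightarrow> bij (\<lambda>x. f (x + a) - f x))"

definition lineL :: "('a::field \<Rightarrow> 'a) \<Rightarrow> 'a \<Rightarrow> 'a \<Rightarrow> 'a point set" where
  "lineL f a b = {Aff x (f (x + a) - b) | x. True} \<union> {Dir (Some a)}"

definition lineN :: "'a \<Rightarrow> 'a point set" where
  "lineN a = {Aff a y | y. True} \<union> {Dir None}"

definition lineInf :: "'a point set" where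
  "lineInf = range Dir"

definition lines :: "('a::field \<Rightarrow> 'a) \<Rightarrow> 'a point set set" where
  "lines f = {lineL f a b | a b. True} \<union> {lineN a | a. True} \<union> {lineInf}"

definition collineation :: "('a::field \<Rightarrow> 'a) \<Rightarrow> ('a point \<Rightarrow> 'a point) \<Rightarrow> bool" where
  "collineation f g \<longleftrightarrow> bij g \<and> (\<forall>l \<in> lines f. g ` l \<in> lines f)"

text \<open>Field automorphisms of 'a (every one fixes the prime field, so for 'a = GF(q^2)
  these form Gal(GF(q^2)/GF(p))).\<close>
definition field_auts :: "('a::field \<Rightarrow> 'a) set" where
  "field_auts = {\<sigma>. bij \<sigma> \<and> (\<forall>x y. \<sigma> (x + y) = \<sigma> x + \<sigma> y) \<and> (\<forall>x y. \<sigma> (x * y) = \<sigma> x * \<sigma> y)}"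

definition gamma :: "nat \<Rightarrow> 'a::field \<Rightarrow> ('a \<Rightarrow> 'a) \<Rightarrow> 'a point \<Rightarrow> 'a point" where
  "gamma d c \<sigma> P = (case P of
      Aff x y \<Rightarrow> Aff (\<sigma> (c * x)) (\<sigma> (c ^ d * y))
    | Dir (Some a) \<Rightarrow> Dir (Some (\<sigma> (c * a)))
    | Dir None \<Rightarrow> Dir None)"

definition Gamma :: "nat \<Rightarrow> ('a::field point \<Rightarrow> 'a point) set" where
  "Gamma d = {gamma d c \<sigma> | c \<sigma>. c \<noteq> 0 \<and> \<sigma> \<in> field_auts}"

text \<open>The subfield GF(q) of GF(q^2).\<close>
definition subfield_q :: "nat \<Rightarrow> 'a::field set" where
  "subfield_q q = {x. x ^ q = x}"

definition nonsquare_in :: "'a::field set \<Rightarrow> 'a \<Rightarrow> bool" where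
  "nonsquare_in K t \<longleftrightarrow> t \<in> K \<and> \<not> (\<exists>s\<in>K. s ^ 2 = t)"

definition U_set :: "nat \<Rightarrow> 'a::field \<Rightarrow> 'a point set" where
  "U_set q \<theta> = {Aff x (t * \<theta>) | x t. t \<in> subfield_q q} \<union> {Dir None}"

end

theory Submission
  imports Defs "HOL-Computational_Algebra.Polynomial"
begin


lemma roots_bound:
  fixes m :: nat assumes "m \<ge> 1"
  shows "card {x::'a::field. x ^ m = 1} \<le> m"
proof -
  let ?p = "monom (1::'a) m - 1"
  have "coeff ?p m = 1" using assms by (simp add: coeff_monom)
  hence ne: "?p \<noteq> 0" by (metis coeff_0 zero_neq_one)
  have "{x::'a. x ^ m = 1} = {x. poly ?p x = 0}" by (auto simp: poly_monom)
  also have "card \<dots> \<le> degree ?p" by (rule card_poly_roots_bound[OF ne])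
  also have "degree ?p \<le> m" by (intro degree_diff_le) (auto simp: degree_monom_le)
  finally show ?thesis .
qed

lemma fermat_field:
  assumes "(x::'a::{field,finite}) \<noteq> 0"
  shows "x ^ (card (UNIV::'a set) - 1) = 1"
proof -
  let ?S = "{y::'a. y \<noteq> 0}"
  have cS: "card ?S = card (UNIV::'a set) - 1"
  proof -
    have "?S = UNIV - {0}" by auto
    thus ?thesis by (simp add: card_Diff_subset)
  qed
  have "prod (\<lambda>y. y) ?S = prod (\<lambda>y. x * y) ?S"
  proof -
    have "inj_on (\<lambda>y. x * y) ?S" using assms by (auto simp: inj_on_def)
    moreover have "(\<lambda>y. x * y) ` ?S = ?S"
    proof
      show "(\<lambda>y. x * y) ` ?S \<subseteq> ?S" using assms by auto
      show "?S \<subseteq> (\<lambda>y. x * y) ` ?S"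
      proof
        fix z assume "z \<in> ?S"
        hence "z = x * (z / x)" "z / x \<in> ?S" using assms by auto
        thus "z \<in> (\<lambda>y. x * y) ` ?S" by blast
      qed
    qed
    ultimately show ?thesis using prod.reindex[of "\<lambda>y. x * y" ?S "\<lambda>y. y"] by simp
  qed
  also have "\<dots> = x ^ card ?S * prod (\<lambda>y. y) ?S" by (simp add: prod.distrib)
  finally have "1 * prod (\<lambda>y. y) ?S = x ^ card ?S * prod (\<lambda>y. y) ?S" by simp
  moreover have "prod (\<lambda>y. y) ?S \<noteq> 0" by simp
  ultimately have "x ^ card ?S = 1" by (metis mult_right_cancel)
  thus ?thesis using cS by simp
qed



lemma aut_basic:
  assumes "\<sigma> \<in> field_auts"
  shows "\<sigma> (x + y) = \<sigma> x + \<sigma> y" "\<sigma> (x * y) = \<sigma> x * \<sigma> y" "bij \<sigma>"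
  using assms by (auto simp: field_auts_def)

lemma aut_0: assumes "\<sigma> \<in> field_auts" shows "\<sigma> (0::'a::field) = 0"
proof -
  have "\<sigma> (0 + 0) = \<sigma> 0 + \<sigma> 0" by (rule aut_basic(1)[OF assms])
  thus ?thesis by (metis add.right_neutral add_left_cancel)
qed

lemma aut_1: assumes "\<sigma> \<in> field_auts" shows "\<sigma> (1::'a::field) = 1"
proof -
  obtain y where y: "\<sigma> y = 1" using aut_basic(3)[OF assms] by (metis bij_pointE)
  have "\<sigma> (1 * y) = \<sigma> 1 * \<sigma> y" by (rule aut_basic(2)[OF assms])
  thus ?thesis using y by simp
qed

lemma aut_minus: assumes "\<sigma> \<in> field_auts" shows "\<sigma> (x - y) = \<sigma> (x::'a::field) - \<sigma> y"
proof -
  have "\<sigma> ((x - y) + y) = \<sigma> (x - y) + \<sigma> y" by (rule aut_basic(1)[OF assms])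
  thus ?thesis by (simp add: algebra_simps)
qed

lemma aut_power: assumes "\<sigma> \<in> field_auts" shows "\<sigma> ((x::'a::field) ^ n) = \<sigma> x ^ n"
  by (induction n) (simp_all add: aut_1[OF assms] aut_basic(2)[OF assms])

lemma aut_inj: assumes "\<sigma> \<in> field_auts" shows "\<sigma> x = \<sigma> y \<longleftrightarrow> x = y"
  using aut_basic(3)[OF assms] by (auto simp: bij_def inj_def)

lemma aut_nz: assumes "\<sigma> \<in> field_auts" "(x::'a::field) \<noteq> 0" shows "\<sigma> x \<noteq> 0"
  using aut_inj[OF assms(1), of x 0] aut_0[OF assms(1)] assms(2) by simp

lemma aut_inverse: assumes "\<sigma> \<in> field_auts" shows "\<sigma> (inverse (x::'a::field)) = inverse (\<sigma> x)"
proof (cases "x = 0")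
  case True thus ?thesis by (simp add: aut_0[OF assms])
next
  case False
  have "\<sigma> (x * inverse x) = 1" using False by (simp add: aut_1[OF assms])
  hence "\<sigma> x * \<sigma> (inverse x) = 1" by (simp add: aut_basic(2)[OF assms])
  thus ?thesis by (metis inverse_unique)
qed

lemma aut_inv: assumes "\<sigma> \<in> field_auts" shows "inv \<sigma> \<in> field_auts"
proof -
  have b: "bij \<sigma>" by (rule aut_basic(3)[OF assms])
  have i: "\<And>z. \<sigma> (inv \<sigma> z) = z" using b by (simp add: bij_is_surj surj_f_inv_f)
  have "\<forall>x y. inv \<sigma> (x + y) = inv \<sigma> x + inv \<sigma> y"
  proof (intro allI)
    fix x y
    have "\<sigma> (inv \<sigma> x + inv \<sigma> y) = x + y" by (simp add: aut_basic(1)[OF assms] i)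
    thus "inv \<sigma> (x + y) = inv \<sigma> x + inv \<sigma> y" using b by (metis bij_inv_eq_iff)
  qed
  moreover have "\<forall>x y. inv \<sigma> (x * y) = inv \<sigma> x * inv \<sigma> y"
  proof (intro allI)
    fix x y
    have "\<sigma> (inv \<sigma> x * inv \<sigma> y) = x * y" by (simp add: aut_basic(2)[OF assms] i)
    thus "inv \<sigma> (x * y) = inv \<sigma> x * inv \<sigma> y" using b by (metis bij_inv_eq_iff)
  qed
  ultimately show ?thesis using b by (simp add: field_auts_def bij_imp_bij_inv)
qed

lemma aut_id: "id \<in> field_auts" by (simp add: field_auts_def)

lemma aut_comp: assumes "\<sigma> \<in> field_auts" "\<tau> \<in> field_auts" shows "\<sigma> \<circ> \<tau> \<in> field_auts"
  using assms by (auto simp: field_auts_def bij_comp)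

lemma gamma_comp:
  assumes s: "\<sigma> \<in> field_auts" and t: "\<tau> \<in> field_auts"
  shows "gamma d c \<sigma> \<circ> gamma d c' \<tau> = gamma d (inv \<tau> c * c') (\<sigma> \<circ> \<tau>)"
proof
  fix P :: "'a::field point"
  have i: "\<tau> (inv \<tau> c) = c" using aut_basic(3)[OF t] by (simp add: bij_is_surj surj_f_inv_f)
  show "(gamma d c \<sigma> \<circ> gamma d c' \<tau>) P = gamma d (inv \<tau> c * c') (\<sigma> \<circ> \<tau>) P"
    by (cases P) (auto split: option.splits simp add: gamma_def aut_basic(2)[OF t] aut_power[OF t] i power_mult_distrib mult.assoc)
qed

lemma gamma_id: "gamma d 1 id = id"
proof
  fix P :: "'a::field point"
  show "gamma d 1 id P = id P"
    by (cases P) (auto split: option.splits simp add: gamma_def)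
qed

lemma gamma_inv:
  assumes s: "\<sigma> \<in> field_auts" and c: "(c::'a::field) \<noteq> 0"
  shows "gamma d c \<sigma> \<circ> gamma d (inverse (\<sigma> c)) (inv \<sigma>) = id"
        "gamma d (inverse (\<sigma> c)) (inv \<sigma>) \<circ> gamma d c \<sigma> = id"
proof -
  have b: "bij \<sigma>" by (rule aut_basic(3)[OF s])
  have ii: "inv (inv \<sigma>) = \<sigma>" using b by (simp add: inv_inv_eq)
  have nz: "\<sigma> c \<noteq> 0" by (rule aut_nz[OF s c])
  have "gamma d c \<sigma> \<circ> gamma d (inverse (\<sigma> c)) (inv \<sigma>) = gamma d (\<sigma> c * inverse (\<sigma> c)) (\<sigma> \<circ> inv \<sigma>)"
    using gamma_comp[OF s aut_inv[OF s]] ii by simp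
  also have "\<dots> = gamma d 1 id" using nz b surj_iff[of \<sigma>] bij_is_surj by auto
  finally show "gamma d c \<sigma> \<circ> gamma d (inverse (\<sigma> c)) (inv \<sigma>) = id" by (simp add: gamma_id)
  have e: "inv \<sigma> (inverse (\<sigma> c)) = inverse c"
    using aut_inverse[OF s, of c] b by (metis bij_inv_eq_iff)
  have "gamma d (inverse (\<sigma> c)) (inv \<sigma>) \<circ> gamma d c \<sigma> = gamma d (inverse c * c) (inv \<sigma> \<circ> \<sigma>)"
    using gamma_comp[OF aut_inv[OF s] s] e by simp
  also have "\<dots> = gamma d 1 id" using c b inj_iff[of \<sigma>] bij_is_inj by auto
  finally show "gamma d (inverse (\<sigma> c)) (inv \<sigma>) \<circ> gamma d c \<sigma> = id" by (simp add: gamma_id)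
qed



lemma gamma_lineL:
  assumes s: "\<sigma> \<in> field_auts"
  shows "gamma d c \<sigma> ` lineL (\<lambda>x::'a::field. x ^ d) a b \<subseteq> lineL (\<lambda>x. x ^ d) (\<sigma> (c * a)) (\<sigma> (c ^ d * b))"
proof
  fix P assume "P \<in> gamma d c \<sigma> ` lineL (\<lambda>x::'a::field. x ^ d) a b"
  then obtain Q where Q: "Q \<in> lineL (\<lambda>x::'a::field. x ^ d) a b" "P = gamma d c \<sigma> Q" by blast
  show "P \<in> lineL (\<lambda>x. x ^ d) (\<sigma> (c * a)) (\<sigma> (c ^ d * b))"
  proof (cases "Q = Dir (Some a)")
    case True thus ?thesis using Q by (simp add: gamma_def lineL_def)
  next
    case False
    then obtain x where x: "Q = Aff x ((x + a) ^ d - b)" using Q(1) by (auto simp: lineL_def)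
    have "\<sigma> (c ^ d * ((x + a) ^ d - b)) = \<sigma> ((c * x + c * a) ^ d - c ^ d * b)"
    proof -
      have "c ^ d * ((x + a) ^ d - b) = (c * x + c * a) ^ d - c ^ d * b"
        by (simp add: right_diff_distrib power_mult_distrib[symmetric] distrib_left)
      thus ?thesis by simp
    qed
    also have "\<dots> = (\<sigma> (c * x) + \<sigma> (c * a)) ^ d - \<sigma> (c ^ d * b)"
      by (simp add: aut_minus[OF s] aut_power[OF s] aut_basic(1)[OF s])
    finally have "P = Aff (\<sigma> (c * x)) ((\<sigma> (c * x) + \<sigma> (c * a)) ^ d - \<sigma> (c ^ d * b))"
      using Q(2) x by (simp add: gamma_def)
    thus ?thesis by (auto simp: lineL_def)
  qed
qed

lemma gamma_lineN:
  "gamma d c \<sigma> ` lineN a \<subseteq> lineN (\<sigma> (c * a))"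
  by (auto simp: lineN_def gamma_def)

lemma gamma_lineInf:
  "gamma d c \<sigma> ` lineInf \<subseteq> lineInf"
  by (auto simp: lineInf_def gamma_def split: option.splits)

lemma img_eq:
  assumes "g \<circ> h = id" "g ` l \<subseteq> l1" "h ` l1 \<subseteq> l"
  shows "g ` l = l1"
proof
  show "g ` l \<subseteq> l1" by fact
  have "l1 = g ` h ` l1" using assms(1) by (simp add: image_comp)
  also have "\<dots> \<subseteq> g ` l" using assms(3) by auto
  finally show "l1 \<subseteq> g ` l" .
qed

lemma gamma_coll:
  assumes s: "\<sigma> \<in> field_auts" and c: "(c::'a::field) \<noteq> 0"
  shows "collineation (\<lambda>x::'a. x ^ d) (gamma d c \<sigma>)"
proof -
  let ?g = "gamma d c \<sigma>" and ?h = "gamma d (inverse (\<sigma> c)) (inv \<sigma>)"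
  let ?c' = "inverse (\<sigma> c)" and ?t = "inv \<sigma>"
  have t: "?t \<in> field_auts" by (rule aut_inv[OF s])
  note gi = gamma_inv[OF s c, of d]
  have hg: "\<And>P. ?h (?g P) = P" using gi(2) by (metis comp_apply id_apply)
  have bij: "bij ?g" using gi by (metis o_bij)
  have e1: "\<And>a. ?t (?c' * \<sigma> (c * a)) = a"
    using hg[of "Dir (Some a)" for a] by (simp add: gamma_def)
  have e2: "\<And>b. ?t (?c' ^ d * \<sigma> (c ^ d * b)) = b"
    using hg[of "Aff 0 b" for b] by (simp add: gamma_def)
  have "\<forall>l \<in> lines (\<lambda>x::'a. x ^ d). ?g ` l \<in> lines (\<lambda>x::'a. x ^ d)"
  proof
    fix l assume "l \<in> lines (\<lambda>x::'a. x ^ d)"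
    then consider (L) a b where "l = lineL (\<lambda>x::'a. x ^ d) a b" | (N) a where "l = lineN a"
       | (I) "l = lineInf" by (auto simp: lines_def)
    thus "?g ` l \<in> lines (\<lambda>x::'a. x ^ d)"
    proof cases
      case L
      have "?g ` l = lineL (\<lambda>x. x ^ d) (\<sigma> (c * a)) (\<sigma> (c ^ d * b))"
        unfolding L
        apply (rule img_eq[OF gi(1) gamma_lineL[OF s]])
        using gamma_lineL[OF t, of d ?c' "\<sigma> (c * a)" "\<sigma> (c ^ d * b)"] e1 e2 by simp
      thus ?thesis by (auto simp: lines_def)
    next
      case N
      have "?g ` l = lineN (\<sigma> (c * a))"
        unfolding N
        apply (rule img_eq[OF gi(1) gamma_lineN])
        using gamma_lineN[of d ?c' ?t "\<sigma> (c * a)"] e1 by simp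
      thus ?thesis by (auto simp: lines_def)
    next
      case I
      have "?g ` l = lineInf"
        unfolding I by (rule img_eq[OF gi(1) gamma_lineInf gamma_lineInf])
      thus ?thesis by (auto simp: lines_def)
    qed
  qed
  thus ?thesis using bij by (simp add: collineation_def)
qed



lemma planar_roots:
  assumes pl: "planar (\<lambda>x::'a::field. x ^ d)" and d: "d > 0"
  shows "(-1::'a) \<noteq> 1" "even d" "\<And>u::'a. u ^ d = 1 \<Longrightarrow> u = 1 \<or> u = -1"
proof -
  let ?D = "\<lambda>x::'a. (x + 1) ^ d - x ^ d"
  have b: "bij ?D" using pl by (simp add: planar_def)
  have Z: "?D (inverse (u - 1)) = 0" if "u ^ d = 1" "u \<noteq> 1" for u :: 'a
  proof -
    have nz: "u - 1 \<noteq> 0" using that by simp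
    have "u / (u - 1) = ((u - 1) + 1) * inverse (u - 1)" by (simp add: divide_inverse)
    also have "\<dots> = (u - 1) * inverse (u - 1) + inverse (u - 1)" by (simp only: distrib_right mult_1_left)
    also have "\<dots> = inverse (u - 1) + 1" using nz by simp
    finally have "inverse (u - 1) + 1 = u / (u - 1)" by simp
    hence "(inverse (u - 1) + 1) ^ d = u ^ d / (u - 1) ^ d" by (simp add: power_divide)
    also have "\<dots> = inverse (u - 1) ^ d" using that by (simp add: power_inverse divide_inverse)
    finally show ?thesis by simp
  qed
  have U: "u = u'" if "u ^ d = 1" "u \<noteq> 1" "u' ^ d = 1" "u' \<noteq> 1" for u u' :: 'a
  proof -
    have "?D (inverse (u - 1)) = ?D (inverse (u' - 1))"
      using Z[OF that(1,2)] Z[OF that(3,4)] by (rule trans[OF _ sym])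
    hence "inverse (u - 1) = inverse (u' - 1)" by (rule injD[OF bij_is_inj[OF b]])
    thus ?thesis by simp
  qed
  obtain x0 where x0': "0 = ?D x0" using surjD[OF bij_is_surj[OF b]] by blast
  have x0: "?D x0 = 0" using x0' by (rule sym)
  have x0nz: "x0 \<noteq> 0"
  proof
    assume "x0 = 0"
    hence "?D x0 = 1" using d by simp
    thus False using x0 by simp
  qed
  define u0 where "u0 = (x0 + 1) / x0"
  have u0d: "u0 ^ d = 1" using x0 x0nz by (simp add: u0_def power_divide)
  have u0n: "u0 \<noteq> 1"
  proof
    assume "u0 = 1" hence "x0 + 1 = x0" using x0nz by (simp add: u0_def divide_eq_eq)
    thus False by simp
  qed
  have u0nz: "u0 \<noteq> 0"
  proof
    assume "u0 = 0" hence "u0 ^ d = 0" using d by simp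
    thus False using u0d by simp
  qed
  have i1: "inverse u0 ^ d = 1" using u0d by (simp add: power_inverse)
  have i2: "inverse u0 \<noteq> 1" using u0n by (metis inverse_1 inverse_inverse_eq)
  have ie: "inverse u0 = u0" using U[OF i1 i2 u0d u0n] .
  have "u0 * inverse u0 = 1" using u0nz by simp
  hence "u0 * u0 = 1" using ie by simp
  hence "u0 ^ 2 = 1" by (simp add: power2_eq_square)
  hence m1: "u0 = -1" using u0n by (simp add: power2_eq_1_iff)
  show "(-1::'a) \<noteq> 1" using u0n m1 by simp
  show "even d"
  proof (rule ccontr)
    assume "odd d" hence "u0 ^ d = -1" using m1 by simp
    thus False using u0d \<open>(-1::'a) \<noteq> 1\<close> by simp
  qed
  show "u = 1 \<or> u = -1" if "u ^ d = 1" for u :: 'a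
  proof (cases "u = 1")
    case False show ?thesis using U[OF that False u0d u0n] m1 by simp
  qed simp
qed



lemma gamma_U:
  assumes c: "(c::'a::field) \<noteq> 0" and e: "c ^ d * \<theta> = \<theta>'"
  shows "gamma d c id ` U_set q \<theta> = U_set q \<theta>'"
proof
  show "gamma d c id ` U_set q \<theta> \<subseteq> U_set q \<theta>'"
  proof
    fix P assume "P \<in> gamma d c id ` U_set q \<theta>"
    then obtain Q where Q: "Q \<in> U_set q \<theta>" "P = gamma d c id Q" by blast
    show "P \<in> U_set q \<theta>'"
    proof (cases "Q = Dir None")
      case True thus ?thesis using Q by (simp add: gamma_def U_set_def)
    next
      case False
      then obtain x t where xt: "Q = Aff x (t * \<theta>)" "t \<in> subfield_q q" using Q(1) by (auto simp: U_set_def)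
      have "c ^ d * (t * \<theta>) = t * \<theta>'" using e by (simp add: algebra_simps)
      hence "P = Aff (c * x) (t * \<theta>')" using Q(2) xt by (simp add: gamma_def)
      thus ?thesis using xt(2) by (auto simp: U_set_def)
    qed
  qed
  show "U_set q \<theta>' \<subseteq> gamma d c id ` U_set q \<theta>"
  proof
    fix P assume P: "P \<in> U_set q \<theta>'"
    show "P \<in> gamma d c id ` U_set q \<theta>"
    proof (cases "P = Dir None")
      case True
      have "Dir None \<in> U_set q \<theta>" by (simp add: U_set_def)
      moreover have "gamma d c id (Dir None) = Dir None" by (simp add: gamma_def)
      ultimately show ?thesis using True by (metis image_eqI)
    next
      case False
      then obtain x t where xt: "P = Aff x (t * \<theta>')" "t \<in> subfield_q q" using P by (auto simp: U_set_def)
      have "c ^ d * (t * \<theta>) = t * \<theta>'" using e by (simp add: algebra_simps)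
      moreover have "c * (x / c) = x" using c by simp
      ultimately have "gamma d c id (Aff (x / c) (t * \<theta>)) = P" using xt by (simp add: gamma_def)
      moreover have "Aff (x / c) (t * \<theta>) \<in> U_set q \<theta>" using xt(2) by (auto simp: U_set_def)
      ultimately show ?thesis by (metis image_eqI)
    qed
  qed
qed

lemma main5:
  fixes \<theta> \<theta>' :: "'a::{field,finite}" and q d :: nat
  assumes card: "card (UNIV :: 'a set) = q ^ 2" and oq: "odd q" and q3: "q \<ge> 2"
    and pl: "planar (\<lambda>x::'a. x ^ d)" and d: "d > 0"
    and t1: "\<theta> \<noteq> 0" and t2: "\<theta>' \<noteq> 0"
    and n1: "nonsquare_in (subfield_q q) (\<theta> ^ (q + 1))"
    and n2: "nonsquare_in (subfield_q q) (\<theta>' ^ (q + 1))"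
  shows "\<exists>g. collineation (\<lambda>x::'a. x ^ d) g \<and> g ` U_set q \<theta> = U_set q \<theta>'"
proof -
  define N where "N = q ^ 2 - 1"
  define M where "M = N div 2"
  have NM: "N = 2 * M" using oq unfolding M_def N_def by (simp add: dvd_div_mult_self)
  have q3': "q \<ge> 3" using oq q3 by presburger
  have "q ^ 2 \<ge> 9" using power_mono[OF q3', of 2] by simp
  hence M1: "M \<ge> 1" unfolding M_def N_def by simp
  have F: "\<And>x::'a. x \<noteq> 0 \<Longrightarrow> x ^ N = 1" using fermat_field card unfolding N_def by metis
  have F2: "\<And>w::'a. w ^ (q ^ 2) = w"
  proof -
    fix w :: 'a
    have qN: "q ^ 2 = Suc N" unfolding N_def using \<open>q ^ 2 \<ge> 9\<close> by simp
    show "w ^ (q ^ 2) = w"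
    proof (cases "w = 0")
      case True thus ?thesis using qN by simp
    next
      case False thus ?thesis using F[OF False] qN by simp
    qed
  qed
  note pr = planar_roots[OF pl d]
  obtain k where k: "d = 2 * k" using pr(2) by (metis evenE)
  define H where "H = (\<lambda>x::'a. x ^ d) ` {x. x \<noteq> 0}"
  define R where "R = {y::'a. y ^ M = 1}"
  have HR: "H \<subseteq> R"
  proof
    fix y assume "y \<in> H"
    then obtain x where x: "x \<noteq> 0" "y = x ^ d" by (auto simp: H_def)
    have "y ^ M = x ^ (N * k)" using x(2) k NM by (simp add: power_mult[symmetric] mult.commute mult.left_commute)
    also have "\<dots> = 1" using F[OF x(1)] by (simp add: power_mult)
    finally show "y \<in> R" by (simp add: R_def)
  qed
  have cR: "card R \<le> M" unfolding R_def by (rule roots_bound[OF M1])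
  have cH: "N \<le> 2 * card H"
  proof -
    have cS: "card {x::'a. x \<noteq> 0} = N"
    proof -
      have "{x::'a. x \<noteq> 0} = UNIV - {0}" by auto
      thus ?thesis using card unfolding N_def by (simp add: card_Diff_subset)
    qed
    have sub: "{x::'a. x \<noteq> 0} \<subseteq> (\<Union>y\<in>H. {x. x ^ d = y})" by (auto simp: H_def)
    have fib: "card {x::'a. x ^ d = y} \<le> 2" if yH: "y \<in> H" for y
    proof -
      obtain x0 where x0: "x0 \<noteq> 0" "y = x0 ^ d" using yH by (auto simp: H_def)
      have "{x::'a. x ^ d = y} \<subseteq> {x0, - x0}"
      proof
        fix x assume "x \<in> {x::'a. x ^ d = y}"
        hence "(x / x0) ^ d = 1" using x0 by (simp add: power_divide)
        hence "x / x0 = 1 \<or> x / x0 = -1" by (rule pr(3))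
        thus "x \<in> {x0, - x0}" using x0(1) by (auto simp: divide_eq_eq)
      qed
      hence "card {x::'a. x ^ d = y} \<le> card {x0, - x0}" by (intro card_mono) auto
      also have "\<dots> \<le> 2" by (simp add: card_insert_if)
      finally show ?thesis .
    qed
    have "N \<le> card (\<Union>y\<in>H. {x::'a. x ^ d = y})" using cS sub by (metis card_mono finite)
    also have "\<dots> \<le> (\<Sum>y\<in>H. card {x::'a. x ^ d = y})" by (rule card_UN_le) simp
    also have "\<dots> \<le> card H * 2" using sum_bounded_above[of H "\<lambda>y. card {x::'a. x ^ d = y}" 2] fib by simp
    finally show ?thesis by simp
  qed
  have HR': "H = R"
    using HR cR cH NM by (intro card_seteq) auto
  have nsq: "z ^ M = -1" if z: "z \<noteq> 0" "nonsquare_in (subfield_q q) (z ^ (q + 1))" for z :: 'a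
  proof -
    have "z ^ M \<noteq> 1"
    proof
      assume "z ^ M = 1"
      hence "z \<in> H" using HR' by (simp add: R_def)
      then obtain x where x: "z = x ^ d" by (auto simp: H_def)
      define w where "w = x ^ k"
      have zw: "z = w ^ 2" using x k by (simp add: w_def power_mult[symmetric] mult.commute)
      have "(w ^ (q + 1)) ^ q = w ^ (q ^ 2) * w ^ q"
        by (simp add: power_mult[symmetric] power_add[symmetric] power2_eq_square algebra_simps)
      also have "\<dots> = w ^ (q + 1)" using F2[of w] by (simp add: mult.commute)
      finally have "w ^ (q + 1) \<in> subfield_q q" by (simp add: subfield_q_def)
      moreover have "(w ^ (q + 1)) ^ 2 = z ^ (q + 1)" using zw by (simp only: power_mult[symmetric] mult.commute)
      ultimately show False using z(2) by (auto simp: nonsquare_in_def)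
    qed
    moreover have "(z ^ M) ^ 2 = 1" using F[OF z(1)] NM by (simp add: power_mult[symmetric] mult.commute)
    ultimately show ?thesis by (simp add: power2_eq_1_iff)
  qed
  have "(\<theta>' / \<theta>) ^ M = 1" using nsq[OF t1 n1] nsq[OF t2 n2] by (simp add: power_divide)
  hence "\<theta>' / \<theta> \<in> H" using HR' by (simp add: R_def)
  then obtain c where c: "c \<noteq> 0" "c ^ d = \<theta>' / \<theta>" by (auto simp: H_def)
  have "c ^ d * \<theta> = \<theta>'" using c(2) t1 by simp
  hence "gamma d c id ` U_set q \<theta> = U_set q \<theta>'" by (rule gamma_U[OF c(1)])
  moreover have "collineation (\<lambda>x::'a. x ^ d) (gamma d c id)" by (rule gamma_coll[OF aut_id c(1)])
  ultimately show ?thesis by blast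
qed


lemma id_Gamma: "id \<in> Gamma d"
proof -
  have "gamma d 1 id \<in> Gamma d" using aut_id unfolding Gamma_def by force
  thus ?thesis by (simp add: gamma_id)
qed

theorem proposition3p3:
  fixes p q n d :: nat
  assumes "prime p" and "odd p" and "n \<ge> 1" and "q = p ^ n"
    and "card (UNIV :: 'a::{field,finite} set) = q ^ 2"
    and "d > 0"
    and "planar (\<lambda>x::'a. x ^ d)"
  shows "(\<forall>c \<sigma>. c \<noteq> (0::'a) \<and> \<sigma> \<in> field_auts \<longrightarrow>
            collineation (\<lambda>x::'a. x ^ d) (gamma d c \<sigma>))
    \<and> id \<in> Gamma d
    \<and> (\<forall>g\<in>Gamma d. \<forall>h\<in>Gamma d. g \<circ> h \<in> (Gamma d :: ('a point \<Rightarrow> 'a point) set))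
    \<and> (\<forall>g\<in>Gamma d. bij g \<and> inv g \<in> (Gamma d :: ('a point \<Rightarrow> 'a point) set))
    \<and> (\<forall>\<theta> \<theta>'::'a. \<theta> \<noteq> 0 \<and> \<theta>' \<noteq> 0
         \<and> nonsquare_in (subfield_q q) (\<theta> ^ (q + 1))
         \<and> nonsquare_in (subfield_q q) (\<theta>' ^ (q + 1))
         \<longrightarrow> (\<exists>g. collineation (\<lambda>x::'a. x ^ d) g \<and> g ` U_set q \<theta> = U_set q \<theta>'))"
proof (intro conjI)
  show "\<forall>c \<sigma>. c \<noteq> (0::'a) \<and> \<sigma> \<in> field_auts \<longrightarrow> collineation (\<lambda>x::'a. x ^ d) (gamma d c \<sigma>)"
    using gamma_coll by blast
  show "id \<in> Gamma d"
    by (rule id_Gamma)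
  show "\<forall>g\<in>Gamma d. \<forall>h\<in>Gamma d. g \<circ> h \<in> (Gamma d :: ('a point \<Rightarrow> 'a point) set)"
  proof (intro ballI)
    fix g h :: "'a point \<Rightarrow> 'a point" assume "g \<in> Gamma d" "h \<in> Gamma d"
    then obtain c \<sigma> c' \<tau> where g: "g = gamma d c \<sigma>" "c \<noteq> 0" "\<sigma> \<in> field_auts"
      and h: "h = gamma d c' \<tau>" "c' \<noteq> 0" "\<tau> \<in> field_auts" by (auto simp: Gamma_def)
    have "g \<circ> h = gamma d (inv \<tau> c * c') (\<sigma> \<circ> \<tau>)" using g h gamma_comp by blast
    moreover have "inv \<tau> c * c' \<noteq> 0" using aut_nz[OF aut_inv[OF h(3)] g(2)] h(2) by simp
    moreover have "\<sigma> \<circ> \<tau> \<in> field_auts" by (rule aut_comp[OF g(3) h(3)])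
    ultimately show "g \<circ> h \<in> Gamma d" unfolding Gamma_def by blast
  qed
  show "\<forall>g\<in>Gamma d. bij g \<and> inv g \<in> (Gamma d :: ('a point \<Rightarrow> 'a point) set)"
  proof (intro ballI)
    fix g :: "'a point \<Rightarrow> 'a point" assume "g \<in> Gamma d"
    then obtain c \<sigma> where g: "g = gamma d c \<sigma>" "c \<noteq> 0" "\<sigma> \<in> field_auts" by (auto simp: Gamma_def)
    note gi = gamma_inv[OF g(3) g(2), of d]
    have "bij g" using gi g(1) by (metis o_bij)
    moreover have "inv g = gamma d (inverse (\<sigma> c)) (inv \<sigma>)" using gi g(1) by (metis inv_unique_comp)
    moreover have "inverse (\<sigma> c) \<noteq> 0" using aut_nz[OF g(3) g(2)] by simp
    ultimately show "bij g \<and> inv g \<in> Gamma d" using aut_inv[OF g(3)] unfolding Gamma_def by blast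
  qed
  have p2: "p \<ge> 2" using assms(1) by (simp add: prime_ge_2_nat)
  have oq: "odd q" using assms(2,4) by simp
  have q2: "q \<ge> 2"
  proof -
    have "p ^ 1 \<le> p ^ n" using assms(3) p2 by (intro power_increasing) auto
    thus ?thesis using p2 assms(4) by simp
  qed
  show "\<forall>\<theta> \<theta>'::'a. \<theta> \<noteq> 0 \<and> \<theta>' \<noteq> 0
         \<and> nonsquare_in (subfield_q q) (\<theta> ^ (q + 1))
         \<and> nonsquare_in (subfield_q q) (\<theta>' ^ (q + 1))
         \<longrightarrow> (\<exists>g. collineation (\<lambda>x::'a. x ^ d) g \<and> g ` U_set q \<theta> = U_set q \<theta>')"
    using main5[OF assms(5) oq q2 assms(7) assms(6)] by blast
qed

end
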